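(* Let $X\in\mathbb{R}^{N\times d}$, $W\in\mathbb{R}^{d\times m}$, $\Phi=\sigma(XW)$, and let $A\in\mathbb{R}^{m\times m}$ have all entries $A_{ij}\ge0$. Let $\gamma>0$ satisfy $\|A\|<\gamma^{-1}$. Then the unique solution $Z$ of $Z=\sigma(\gamma ZA+\Phi)$ is $Z=\Phi(I_m-\gamma A)^{-1}$.
   Context: $\sigma(u)=\max\{0,u\}$ applied entrywise; $\|\cdot\|$ is the spectral norm. *)

theory Defs
  imports "HOL-Analysis.Analysis"
begin

definition relu_mat :: "real^'m^'n \<Rightarrow> real^'m^'n" where
  "relu_mat M = (\<chi> i j. max 0 (M $ i $ j))"

definition spec_norm :: "real^'m^'n \<Rightarrow> real" where
  "spec_norm A = onorm (\<lambda>v. A *v v)"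

end

theory Submission
  imports Defs
begin

fun mp :: "real^'m^'m \<Rightarrow> nat \<Rightarrow> real^'m^'m" where
  "mp B 0 = mat 1" | "mp B (Suc n) = B ** mp B n"

lemma mp_Suc': "mp B (Suc n) = mp B n ** B"
  by (induction n) (simp_all add: matrix_mul_assoc)

lemma mp_norm:
  assumes "\<And>v. norm (B *v v) \<le> q * norm v" "0 \<le> q"
  shows "norm (mp B n *v v) \<le> q ^ n * norm v"
proof (induction n)
  case 0 then show ?case by simp
next
  case (Suc n)
  have "norm (mp B (Suc n) *v v) = norm (B *v (mp B n *v v))"
    by (simp add: matrix_vector_mul_assoc)
  also have "\<dots> \<le> q * norm (mp B n *v v)" by (rule assms(1))
  also have "\<dots> \<le> q * (q ^ n * norm v)" using Suc assms(2) by (simp add: mult_left_mono)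
  finally show ?case by simp
qed

lemma mp_entry:
  assumes "\<And>v. norm (B *v v) \<le> q * norm v" "0 \<le> q"
  shows "\<bar>mp B n $ i $ j\<bar> \<le> q ^ n"
proof -
  have "mp B n $ i $ j = (mp B n *v axis j 1) $ i"
    by (simp add: matrix_vector_mult_def axis_def if_distrib cong: if_cong)
  then have "\<bar>mp B n $ i $ j\<bar> \<le> norm (mp B n *v axis j 1)"
    by (simp add: component_le_norm_cart)
  also have "\<dots> \<le> q ^ n" using mp_norm[OF assms, of n "axis j 1"] by simp
  finally show ?thesis .
qed

lemma mp_nonneg:
  assumes "\<And>i j. B $ i $ j \<ge> 0"
  shows "mp B n $ i $ j \<ge> 0"
  using assms
  by (induction n arbitrary: i j) (auto simp: mat_def matrix_matrix_mult_def intro!: sum_nonneg)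

lemma lim_le0:
  fixes x C q :: real
  assumes "0 \<le> q" "q < 1" "\<And>n. x \<le> C * q ^ n"
  shows "x \<le> 0"
proof -
  have "(\<lambda>n. C * q ^ n) \<longlonglongrightarrow> C * 0"
    by (intro tendsto_mult tendsto_const LIMSEQ_power_zero) (use assms in auto)
  then show ?thesis using assms(3) by (intro LIMSEQ_le_const[where X="\<lambda>n. C * q ^ n"]) auto
qed

lemma left_zero:
  fixes B :: "real^'m^'m" and E :: "real^'k^'m"
  assumes Bnn: "\<And>i j. B $ i $ j \<ge> 0"
    and hB: "\<And>v. norm (B *v v) \<le> q * norm v" and q: "0 \<le> q" "q < 1"
    and Enn: "\<And>i j. E $ i $ j \<ge> 0"
    and hE: "\<And>i j. E $ i $ j \<le> (B ** E) $ i $ j"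
  shows "E $ i $ j = 0"
proof -
  have ind: "E $ i $ j \<le> (mp B n ** E) $ i $ j" for n i j
  proof (induction n arbitrary: i j)
    case 0 then show ?case by simp
  next
    case (Suc n)
    have "E $ i $ j \<le> (\<Sum>k\<in>UNIV. B $ i $ k * E $ k $ j)"
      using hE[of i j] by (simp add: matrix_matrix_mult_def)
    also have "\<dots> \<le> (\<Sum>k\<in>UNIV. B $ i $ k * (mp B n ** E) $ k $ j)"
      by (intro sum_mono mult_left_mono Suc Bnn)
    also have "\<dots> = (B ** (mp B n ** E)) $ i $ j" by (simp add: matrix_matrix_mult_def)
    finally show ?case by (simp add: matrix_mul_assoc)
  qed
  have "E $ i $ j \<le> (\<Sum>k\<in>UNIV. E $ k $ j) * q ^ n" for n
  proof -
    have "E $ i $ j \<le> (\<Sum>k\<in>UNIV. mp B n $ i $ k * E $ k $ j)"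
      using ind[of i j n] by (simp add: matrix_matrix_mult_def)
    also have "\<dots> \<le> (\<Sum>k\<in>UNIV. q ^ n * E $ k $ j)"
      by (intro sum_mono mult_right_mono Enn) (use mp_entry[OF hB q(1)] abs_le_D1 in blast)
    finally show ?thesis by (simp add: sum_distrib_left mult.commute)
  qed
  then have "E $ i $ j \<le> 0" by (intro lim_le0[OF q]) 
  with Enn[of i j] show ?thesis by simp
qed

lemma right_zero:
  fixes B :: "real^'m^'m" and E :: "real^'m^'k"
  assumes Bnn: "\<And>i j. B $ i $ j \<ge> 0"
    and hB: "\<And>v. norm (B *v v) \<le> q * norm v" and q: "0 \<le> q" "q < 1"
    and Enn: "\<And>i j. E $ i $ j \<ge> 0"
    and hE: "\<And>i j. E $ i $ j \<le> (E ** B) $ i $ j"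
  shows "E $ i $ j = 0"
proof -
  have ind: "E $ i $ j \<le> (E ** mp B n) $ i $ j" for n i j
  proof (induction n arbitrary: i j)
    case 0 then show ?case by simp
  next
    case (Suc n)
    have "E $ i $ j \<le> (\<Sum>k\<in>UNIV. E $ i $ k * B $ k $ j)"
      using hE[of i j] by (simp add: matrix_matrix_mult_def)
    also have "\<dots> \<le> (\<Sum>k\<in>UNIV. (E ** mp B n) $ i $ k * B $ k $ j)"
      by (intro sum_mono mult_right_mono Suc Bnn)
    also have "\<dots> = ((E ** mp B n) ** B) $ i $ j" by (simp add: matrix_matrix_mult_def)
    finally show ?case by (simp del: mp.simps add: matrix_mul_assoc mp_Suc')
  qed
  have "E $ i $ j \<le> (\<Sum>k\<in>UNIV. E $ i $ k) * q ^ n" for n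
  proof -
    have "E $ i $ j \<le> (\<Sum>k\<in>UNIV. E $ i $ k * mp B n $ k $ j)"
      using ind[of i j n] by (simp add: matrix_matrix_mult_def)
    also have "\<dots> \<le> (\<Sum>k\<in>UNIV. E $ i $ k * q ^ n)"
      by (intro sum_mono mult_left_mono Enn) (use mp_entry[OF hB q(1)] abs_le_D1 in blast)
    finally show ?thesis by (simp add: sum_distrib_right)
  qed
  then have "E $ i $ j \<le> 0" by (intro lim_le0[OF q]) 
  with Enn[of i j] show ?thesis by simp
qed

theorem lemma5:
  fixes X :: "real^'d^'N" and W :: "real^'m^'d" and A :: "real^'m^'m" and \<gamma> :: real
  assumes "\<And>i j. A $ i $ j \<ge> 0"
    and "\<gamma> > 0"
    and "spec_norm A < inverse \<gamma>"
  shows "invertible (mat 1 - \<gamma> *\<^sub>R A) \<and>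
    (\<forall>Z :: real^'m^'N.
        Z = relu_mat (\<gamma> *\<^sub>R (Z ** A) + relu_mat (X ** W)) \<longleftrightarrow>
        Z = relu_mat (X ** W) ** matrix_inv (mat 1 - \<gamma> *\<^sub>R A))"
proof -
  define B where "B = \<gamma> *\<^sub>R A"
  define q where "q = \<gamma> * spec_norm A"
  define M where "M = mat 1 - B"
  define \<Phi> where "\<Phi> = relu_mat (X ** W)"
  have Bnn: "\<And>i j. B $ i $ j \<ge> 0" using assms(1,2) by (simp add: B_def)
  have sn: "0 \<le> spec_norm A" unfolding spec_norm_def by (rule onorm_pos_le) simp
  have q0: "0 \<le> q" using sn assms(2) by (simp add: q_def)
  have q1: "q < 1"
  proof -
    have "q < \<gamma> * inverse \<gamma>" unfolding q_def using assms(2,3) by (intro mult_strict_left_mono) auto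
    then show ?thesis using assms(2) by simp
  qed
  have hB: "norm (B *v v) \<le> q * norm v" for v
  proof -
    have "B *v v = \<gamma> *\<^sub>R (A *v v)" by (simp add: B_def scaleR_matrix_vector_assoc)
    then have "norm (B *v v) = \<gamma> * norm (A *v v)" using assms(2) by simp
    also have "\<dots> \<le> \<gamma> * (spec_norm A * norm v)"
      unfolding spec_norm_def using assms(2) by (intro mult_left_mono onorm) auto
    finally show ?thesis by (simp add: q_def)
  qed
  have inv: "invertible M"
    unfolding invertible_left_inverse matrix_left_invertible_ker
  proof (intro allI impI)
    fix x assume "M *v x = 0"
    then have "x = B *v x" by (simp add: M_def algebra_simps)
    then have "norm x \<le> q * norm x" using hB[of x] by simp
    then have "norm x = 0" using q1 by (smt (verit) mult_le_cancel_right1 norm_ge_zero)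
    then show "x = 0" by simp
  qed
  define N where "N = matrix_inv M"
  have MN: "M ** N = mat 1 \<and> N ** M = mat 1"
    using inv unfolding N_def matrix_inv_def invertible_def by (rule someI_ex)
  have Nnn: "N $ i $ j \<ge> 0" for i j
  proof -
    define E where "E = ((\<chi> i j. max 0 (- N $ i $ j)) :: real^'m^'m)"
    have Eij: "E $ i $ j = max 0 (- N $ i $ j)" for i j by (simp add: E_def)
    have Nrec: "N $ i $ j = mat 1 $ i $ j + (B ** N) $ i $ j" for i j
    proof -
      have "(M ** N) $ i $ j = mat 1 $ i $ j" using MN by simp
      moreover have "(M ** N) $ i $ j = N $ i $ j - (B ** N) $ i $ j"
        by (simp add: M_def matrix_matrix_mult_def mat_def algebra_simps sum_subtractf
              if_distrib[of "\<lambda>x. x * _"] if_distrib[of "\<lambda>x. _ * x"] cong: if_cong)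
      ultimately show ?thesis by simp
    qed
    have "E $ i $ j = 0" for i j
    proof (rule left_zero[OF Bnn hB q0 q1])
      show "0 \<le> E $ i $ j" for i j by (simp add: Eij)
      show "E $ i $ j \<le> (B ** E) $ i $ j" for i j
      proof -
        have r: "(B ** E) $ i $ j = (\<Sum>k\<in>UNIV. B $ i $ k * E $ k $ j)"
          by (simp add: matrix_matrix_mult_def)
        have "0 \<le> (\<Sum>k\<in>UNIV. B $ i $ k * E $ k $ j)"
          by (intro sum_nonneg mult_nonneg_nonneg Bnn) (simp add: Eij)
        moreover have "- N $ i $ j \<le> (\<Sum>k\<in>UNIV. B $ i $ k * E $ k $ j)"
        proof -
          have "- N $ i $ j \<le> - (B ** N) $ i $ j"
            using Nrec[of i j] by (simp add: mat_def)
          also have "\<dots> = (\<Sum>k\<in>UNIV. B $ i $ k * (- N $ k $ j))"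
            by (simp add: matrix_matrix_mult_def sum_negf)
          also have "\<dots> \<le> (\<Sum>k\<in>UNIV. B $ i $ k * E $ k $ j)"
            by (intro sum_mono mult_left_mono Bnn) (simp add: Eij)
          finally show ?thesis .
        qed
        ultimately show ?thesis by (simp add: r Eij)
      qed
    qed
    then show ?thesis using Eij[of i j] by simp
  qed
  have \<Phi>nn: "\<Phi> $ i $ j \<ge> 0" for i j by (simp add: \<Phi>_def relu_mat_def)
  define Z0 where "Z0 = \<Phi> ** N"
  have Z0nn: "Z0 $ i $ j \<ge> 0" for i j
    unfolding Z0_def matrix_matrix_mult_def
    by (simp, intro sum_nonneg mult_nonneg_nonneg \<Phi>nn Nnn)
  have Z0M: "Z0 ** M = \<Phi>" using MN by (simp add: Z0_def matrix_mul_assoc[symmetric])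
  have Z0eq: "\<gamma> *\<^sub>R (Z0 ** A) + \<Phi> = Z0"
  proof -
    have "(Z0 ** M) $ i $ j = Z0 $ i $ j - (\<gamma> *\<^sub>R (Z0 ** A)) $ i $ j" for i j
      by (simp add: M_def B_def matrix_matrix_mult_def mat_def algebra_simps sum_subtractf
              sum_distrib_left if_distrib[of "\<lambda>x. _ * x"] if_distrib[of "\<lambda>x. x * _"] cong: if_cong)
    then show ?thesis using Z0M by (simp add: vec_eq_iff)
  qed
  have fix0: "Z0 = relu_mat (\<gamma> *\<^sub>R (Z0 ** A) + \<Phi>)"
    unfolding Z0eq relu_mat_def using Z0nn by (simp add: vec_eq_iff max_absorb2)
  have uniq: "Z = Z0" if hZ: "Z = relu_mat (\<gamma> *\<^sub>R (Z ** A) + \<Phi>)" for Z :: "real^'m^'N"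
  proof -
    define D where "D = ((\<chi> i j. \<bar>Z $ i $ j - Z0 $ i $ j\<bar>) :: real^'m^'N)"
    have Dij: "D $ i $ j = \<bar>Z $ i $ j - Z0 $ i $ j\<bar>" for i j by (simp add: D_def)
    have "D $ i $ j = 0" for i j
    proof (rule right_zero[OF Bnn hB q0 q1])
      show "0 \<le> D $ i $ j" for i j by (simp add: Dij)
      show "D $ i $ j \<le> (D ** B) $ i $ j" for i j
      proof -
        have zi: "Z $ i $ j = max 0 (\<gamma> * (\<Sum>k\<in>UNIV. Z $ i $ k * A $ k $ j) + \<Phi> $ i $ j)"
          by (subst hZ) (simp add: relu_mat_def matrix_matrix_mult_def)
        have z0i: "Z0 $ i $ j = max 0 (\<gamma> * (\<Sum>k\<in>UNIV. Z0 $ i $ k * A $ k $ j) + \<Phi> $ i $ j)"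
          by (subst fix0) (simp add: relu_mat_def matrix_matrix_mult_def)
        have "D $ i $ j \<le> \<bar>\<gamma> * (\<Sum>k\<in>UNIV. Z $ i $ k * A $ k $ j) - \<gamma> * (\<Sum>k\<in>UNIV. Z0 $ i $ k * A $ k $ j)\<bar>"
          unfolding Dij zi z0i by linarith
        also have "\<dots> = \<bar>\<Sum>k\<in>UNIV. (Z $ i $ k - Z0 $ i $ k) * B $ k $ j\<bar>"
          by (simp add: B_def sum_distrib_left sum_subtractf[symmetric] algebra_simps)
        also have "\<dots> \<le> (\<Sum>k\<in>UNIV. \<bar>(Z $ i $ k - Z0 $ i $ k) * B $ k $ j\<bar>)"
          by (rule sum_abs)
        also have "\<dots> = (\<Sum>k\<in>UNIV. D $ i $ k * B $ k $ j)"
          using Bnn by (simp add: Dij abs_mult)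
        also have "\<dots> = (D ** B) $ i $ j" by (simp add: matrix_matrix_mult_def)
        finally show ?thesis .
      qed
    qed
    then show ?thesis by (simp add: vec_eq_iff Dij)
  qed
  show ?thesis
    using inv uniq fix0 unfolding M_def B_def \<Phi>_def N_def Z0_def by metis
qed

end
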